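(* Let $n\ge 2$ and let $C_n$ be the cycle graph with vertices $p_1,\dots,p_n$ and edges $e_i$ joining $p_i$ and $p_{i+1}$ (indices mod $n$). For each $i$ let $G_i$ be a connected graph with two given distinct vertices $s_i,t_i$. Let $CG_n$ be the graph obtained from $C_n$ by replacing each edge $e_i$ by a copy of $G_i$, identifying $s_i$ with $p_i$ and $t_i$ with $p_{i+1}$ (the copies being otherwise disjoint). Then $$t(CG_n)=\prod_{i=1}^n t(G_i)\sum_{i=1}^n\frac{t(G_{i,s_it_i})}{t(G_i)},$$ where $G_{i,s_it_i}$ is obtained from $G_i$ by identifying $s_i$ and $t_i$. In particular, if each $G_i$ is a copy of the same graph $G$ with fixed vertices $s,t$, then $t(CG_n)=n\,t(G)^{n-1}\,t(G_{st})$.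
   Context: Graphs are finite and may have multiple edges and loops; $t(H)$ is the number of spanning trees of $H$ (a one-vertex graph has $t=1$). $G_{st}$ is obtained from $G$ by identifying $s$ and $t$. *)

theory Defs
  imports Complex_Main
begin

text \<open>A finite multigraph (loops and parallel edges allowed): a vertex set, an edge set,
  and an endpoint map assigning each edge its (unordered) pair of ends.\<close>
type_synonym ('v,'e) mgraph = "'v set \<times> 'e set \<times> ('e \<Rightarrow> 'v \<times> 'v)"

definition verts :: "('v,'e) mgraph \<Rightarrow> 'v set" where "verts G = fst G"
definition edges :: "('v,'e) mgraph \<Rightarrow> 'e set" where "edges G = fst (snd G)"
definition ends :: "('v,'e) mgraph \<Rightarrow> 'e \<Rightarrow> 'v \<times> 'v" where "ends G = snd (snd G)"

definition wf_graph :: "('v,'e) mgraph \<Rightarrow> bool" where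
  "wf_graph G \<longleftrightarrow> finite (verts G) \<and> finite (edges G) \<and>
     (\<forall>e\<in>edges G. fst (ends G e) \<in> verts G \<and> snd (ends G e) \<in> verts G)"

definition adj :: "('e \<Rightarrow> 'v \<times> 'v) \<Rightarrow> 'e set \<Rightarrow> 'v \<Rightarrow> 'v \<Rightarrow> bool" where
  "adj en F u v \<longleftrightarrow> (\<exists>e\<in>F. en e = (u,v) \<or> en e = (v,u))"

definition linked :: "('e \<Rightarrow> 'v \<times> 'v) \<Rightarrow> 'e set \<Rightarrow> 'v \<Rightarrow> 'v \<Rightarrow> bool" where
  "linked en F u v \<longleftrightarrow> (adj en F)\<^sup>*\<^sup>* u v"

definition connected_graph :: "('v,'e) mgraph \<Rightarrow> bool" where
  "connected_graph G \<longleftrightarrow> (\<forall>u\<in>verts G. \<forall>v\<in>verts G. linked (ends G) (edges G) u v)"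

text \<open>A spanning tree, given by its edge set T: the spanning subgraph (verts G, T) is connected
  and acyclic (no edge lies on a cycle, i.e. its ends are not linked without it; this
  excludes loops and parallel edges).\<close>
definition is_spanning_tree :: "('v,'e) mgraph \<Rightarrow> 'e set \<Rightarrow> bool" where
  "is_spanning_tree G T \<longleftrightarrow> T \<subseteq> edges G \<and>
     (\<forall>u\<in>verts G. \<forall>v\<in>verts G. linked (ends G) T u v) \<and>
     (\<forall>e\<in>T. \<not> linked (ends G) (T - {e}) (fst (ends G e)) (snd (ends G e)))"

definition num_spanning_trees :: "('v,'e) mgraph \<Rightarrow> nat" where
  "num_spanning_trees G = card {T. is_spanning_tree G T}"

definition identify :: "('v,'e) mgraph \<Rightarrow> 'v \<Rightarrow> 'v \<Rightarrow> ('v,'e) mgraph" where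
  "identify G s t =
     (let f = (\<lambda>x. if x = t then s else x)
      in (verts G - {t}, edges G, \<lambda>e. map_prod f f (ends G e)))"

text \<open>Cycle gluing CG_n (indices 0..n-1): the cycle vertex p_i is Inl i; the edge e_i
  (joining p_i and p_{(i+1) mod n}) is replaced by a copy of G i with s i glued to p_i and
  t i glued to p_{(i+1) mod n}; the other vertices of the copy are Inr (i,v).\<close>
definition glue_vert :: "nat \<Rightarrow> (nat \<Rightarrow> 'v) \<Rightarrow> (nat \<Rightarrow> 'v) \<Rightarrow> nat \<Rightarrow> 'v \<Rightarrow> nat + (nat \<times> 'v)" where
  "glue_vert n s t i v =
     (if v = s i then Inl i else if v = t i then Inl (Suc i mod n) else Inr (i, v))"

definition cycle_glue :: "nat \<Rightarrow> (nat \<Rightarrow> ('v,'e) mgraph) \<Rightarrow> (nat \<Rightarrow> 'v) \<Rightarrow> (nat \<Rightarrow> 'v)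
    \<Rightarrow> (nat + (nat \<times> 'v), nat \<times> 'e) mgraph" where
  "cycle_glue n G s t =
     ({Inl i | i. i < n} \<union> {Inr (i, v) | i v. i < n \<and> v \<in> verts (G i) - {s i, t i}},
      {(i, e) | i e. i < n \<and> e \<in> edges (G i)},
      \<lambda>(i, e). map_prod (glue_vert n s t i) (glue_vert n s t i) (ends (G i) e))"

end

theory Submission imports Defs "HOL-Library.FuncSet" begin

lemma adj_sym: "adj en F u v = adj en F v u" by (auto simp: adj_def)

lemma linked_refl[simp]: "linked en F u u" by (simp add: linked_def)

lemma linked_trans: "linked en F u v \<Longrightarrow> linked en F v w \<Longrightarrow> linked en F u w"
  unfolding linked_def by (rule rtranclp_trans)

lemma linked_sym: "linked en F u v \<Longrightarrow> linked en F v u"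
  unfolding linked_def
proof (induction rule: rtranclp_induct)
  case (step y z)
  then show ?case by (metis adj_sym converse_rtranclp_into_rtranclp)
qed simp

lemma linked_edge: "e \<in> F \<Longrightarrow> linked en F (fst (en e)) (snd (en e))"
  unfolding linked_def adj_def
  by (rule r_into_rtranclp) (metis prod.collapse)

lemma linked_edge2: "e \<in> F \<Longrightarrow> en e = (a,b) \<Longrightarrow> linked en F a b"
  using linked_edge[of e F en] by simp

lemma linked_mono: "F \<subseteq> F' \<Longrightarrow> linked en F u v \<Longrightarrow> linked en F' u v"
proof -
  assume "F \<subseteq> F'" "linked en F u v"
  then have "adj en F \<le> adj en F'" unfolding adj_def by blast
  then show ?thesis using \<open>linked en F u v\<close> unfolding linked_def
    by (metis predicate2D rtranclp_mono)
qed

lemma linked_empty: "linked en {} u v \<Longrightarrow> u = v"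
  unfolding linked_def adj_def
  by (induction rule: rtranclp_induct) auto

lemma linked_map:
  assumes "\<forall>e\<in>F. g e \<in> F' \<and> en' (g e) = map_prod h h (en e)"
  shows "linked en F u v \<Longrightarrow> linked en' F' (h u) (h v)"
  unfolding linked_def
proof (induction rule: rtranclp_induct)
  case (step y z)
  then obtain e where "e \<in> F" "en e = (y,z) \<or> en e = (z,y)" by (auto simp: adj_def)
  with assms have "adj en' F' (h y) (h z)" unfolding adj_def by (metis map_prod_simp)
  with step show ?case by (meson rtranclp.rtrancl_into_rtrancl)
qed simp

lemma linked_label:
  assumes "\<forall>e\<in>F. L (fst (en e)) = L (snd (en e))"
  shows "linked en F u v \<Longrightarrow> L u = L v"
  unfolding linked_def
proof (induction rule: rtranclp_induct)
  case (step y z)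
  then obtain e where "e \<in> F" "en e = (y,z) \<or> en e = (z,y)" by (auto simp: adj_def)
  with assms step show ?case by (metis fst_conv snd_conv)
qed simp

lemma linked_del:
  assumes "linked en F u v"
  shows "linked en (F-{e}) u v \<or> (linked en (F-{e}) u (fst (en e)) \<and> linked en (F-{e}) (snd (en e)) v)
     \<or> (linked en (F-{e}) u (snd (en e)) \<and> linked en (F-{e}) (fst (en e)) v)"
  using assms unfolding linked_def[of en F]
proof (induction rule: rtranclp_induct)
  case (step y z)
  then obtain e' where e': "e' \<in> F" "en e' = (y,z) \<or> en e' = (z,y)" by (auto simp: adj_def)
  show ?case
  proof (cases "e' = e")
    case True
    with e' step.IH show ?thesis
      by (auto dest: linked_trans linked_sym)
  next
    case False
    with e' have "linked en (F-{e}) y z"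
      by (metis Diff_iff empty_iff insert_iff linked_edge2 linked_sym)
    with step.IH show ?thesis by (meson linked_trans linked_sym)
  qed
qed simp

lemma linked_path:
  assumes "finite F" "linked en F u v" "u \<noteq> v"
  shows "\<exists>e\<in>F. (linked en (F-{e}) u (fst (en e)) \<and> linked en (F-{e}) (snd (en e)) v)
     \<or> (linked en (F-{e}) u (snd (en e)) \<and> linked en (F-{e}) (fst (en e)) v)"
  using assms
proof (induction "card F" arbitrary: F rule: less_induct)
  case less
  show ?case
  proof (cases "\<exists>e\<in>F. linked en (F-{e}) u v")
    case True
    then obtain e where e: "e \<in> F" "linked en (F-{e}) u v" by blast
    have "card (F-{e}) < card F" using e less.prems(1) by (meson card_Diff1_less)
    from less.hyps[OF this _ e(2) less.prems(3)] less.prems(1)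
    obtain e' where "e' \<in> F - {e}"
      "(linked en (F-{e}-{e'}) u (fst (en e')) \<and> linked en (F-{e}-{e'}) (snd (en e')) v)
     \<or> (linked en (F-{e}-{e'}) u (snd (en e')) \<and> linked en (F-{e}-{e'}) (fst (en e')) v)" by auto
    moreover have "F-{e}-{e'} \<subseteq> F-{e'}" by blast
    ultimately show ?thesis by (meson DiffD1 linked_mono)
  next
    case False
    have "F \<noteq> {}" using less.prems linked_empty by metis
    then obtain e where "e \<in> F" by blast
    with linked_del[OF less.prems(2), of e] False show ?thesis by blast
  qed
qed

definition forest :: "('e \<Rightarrow> 'v \<times> 'v) \<Rightarrow> 'e set \<Rightarrow> bool" where
  "forest en F \<longleftrightarrow> (\<forall>e\<in>F. \<not> linked en (F - {e}) (fst (en e)) (snd (en e)))"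

definition good :: "('v,'e) mgraph \<Rightarrow> 'v \<Rightarrow> 'v \<Rightarrow> 'e set \<Rightarrow> bool" where
  "good G s t F \<longleftrightarrow> F \<subseteq> edges G \<and> forest (ends G) F \<and>
     (\<forall>x\<in>verts G. linked (ends G) F x s \<or> linked (ends G) F x t)"

lemma st_iff_forest: "is_spanning_tree G T \<longleftrightarrow> T \<subseteq> edges G \<and>
     (\<forall>u\<in>verts G. \<forall>v\<in>verts G. linked (ends G) T u v) \<and> forest (ends G) T"
  by (simp add: is_spanning_tree_def forest_def)

lemma C1:
  assumes "s \<in> verts G" "t \<in> verts G"
  shows "is_spanning_tree G F \<longleftrightarrow> good G s t F \<and> linked (ends G) F s t"
  unfolding st_iff_forest good_def using assms
  by (meson linked_sym linked_trans)

lemma finite_edges: "wf_graph G \<Longrightarrow> finite (edges G)" by (simp add: wf_graph_def)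

lemma identify_simps:
  "verts (identify G s t) = verts G - {t}"
  "edges (identify G s t) = edges G"
  "ends (identify G s t) = (\<lambda>e. map_prod (\<lambda>x. if x = t then s else x) (\<lambda>x. if x = t then s else x) (ends G e))"
  by (simp_all add: identify_def verts_def edges_def ends_def Let_def)

lemma id_map:
  assumes "linked (ends G) F x y"
  shows "linked (ends (identify G s t)) F (if x = t then s else x) (if y = t then s else y)"
  by (rule linked_map[OF _ assms, of id]) (simp add: identify_simps)

lemma id_rev0:
  assumes "linked (ends (identify G s t)) F X Y"
  shows "linked (ends G) F X Y \<or> ((linked (ends G) F X s \<or> linked (ends G) F X t) \<and>
           (linked (ends G) F Y s \<or> linked (ends G) F Y t))"
  using assms unfolding linked_def[of "ends (identify G s t)"]
proof (induction rule: rtranclp_induct)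
  case (step y z)
  then obtain e where e: "e \<in> F" "ends (identify G s t) e = (y,z) \<or> ends (identify G s t) e = (z,y)"
    by (auto simp: adj_def)
  obtain a b where ab: "ends G e = (a,b)" by fastforce
  have lab: "linked (ends G) F a b" "linked (ends G) F b a"
    using e(1) ab linked_edge2 linked_sym by metis+
  let ?f = "\<lambda>x. if x = t then s else x"
  have yz: "(y = ?f a \<and> z = ?f b) \<or> (y = ?f b \<and> z = ?f a)"
    using e(2) ab by (auto simp: identify_simps)
  show ?case using yz lab step.IH
    by (smt (verit) linked_refl linked_sym linked_trans)
qed simp

lemma id_rev:
  assumes "linked (ends (identify G s t)) F (if x = t then s else x) (if y = t then s else y)"
  shows "linked (ends G) F x y \<or> ((linked (ends G) F x s \<or> linked (ends G) F x t) \<and>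
           (linked (ends G) F y s \<or> linked (ends G) F y t))"
  using id_rev0[OF assms]
  by (smt (verit) linked_refl linked_sym linked_trans)

lemma C2:
  assumes wf: "wf_graph G" and st: "s \<in> verts G" "t \<in> verts G" "s \<noteq> t"
  shows "is_spanning_tree (identify G s t) F \<longleftrightarrow> good G s t F \<and> \<not> linked (ends G) F s t"
proof
  let ?f = "\<lambda>x. if x = t then s else x"
  assume A: "is_spanning_tree (identify G s t) F"
  have FE: "F \<subseteq> edges G" using A by (simp add: st_iff_forest identify_simps)
  have conn: "\<forall>u\<in>verts G - {t}. \<forall>v\<in>verts G - {t}. linked (ends (identify G s t)) F u v"
    using A by (simp add: st_iff_forest identify_simps)
  have forI: "forest (ends (identify G s t)) F" using A by (simp add: st_iff_forest)
  have for1: "forest (ends G) F"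
    unfolding forest_def
  proof
    fix e assume e: "e \<in> F"
    show "\<not> linked (ends G) (F - {e}) (fst (ends G e)) (snd (ends G e))"
    proof
      assume "linked (ends G) (F - {e}) (fst (ends G e)) (snd (ends G e))"
      from id_map[OF this, where s=s and t=t]
      have "linked (ends (identify G s t)) (F - {e}) (fst (ends (identify G s t) e)) (snd (ends (identify G s t) e))"
        by (simp add: identify_simps map_prod_def split_beta)
      with forI e show False by (simp add: forest_def)
    qed
  qed
  have near: "\<forall>x\<in>verts G. linked (ends G) F x s \<or> linked (ends G) F x t"
  proof
    fix x assume x: "x \<in> verts G"
    show "linked (ends G) F x s \<or> linked (ends G) F x t"
    proof (cases "x = t")
      case False
      then have "linked (ends (identify G s t)) F (?f x) (?f s)" using conn x st by auto
      from id_rev[OF this] show ?thesis by blast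
    qed simp
  qed
  have nst: "\<not> linked (ends G) F s t"
  proof
    assume "linked (ends G) F s t"
    from linked_path[OF _ this st(3)] FE wf finite_edges[OF wf]
    obtain e where e: "e \<in> F" and
      c: "(linked (ends G) (F-{e}) s (fst (ends G e)) \<and> linked (ends G) (F-{e}) (snd (ends G e)) t)
     \<or> (linked (ends G) (F-{e}) s (snd (ends G e)) \<and> linked (ends G) (F-{e}) (fst (ends G e)) t)"
      by (meson finite_subset)
    have "linked (ends (identify G s t)) (F - {e}) (?f (fst (ends G e))) (?f (snd (ends G e)))"
      using c
    proof
      assume c1: "linked (ends G) (F-{e}) s (fst (ends G e)) \<and> linked (ends G) (F-{e}) (snd (ends G e)) t"
      have 1: "linked (ends (identify G s t)) (F - {e}) s (?f (fst (ends G e)))"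
        using id_map[where G=G and F="F-{e}" and x=s and y="fst (ends G e)" and s=s and t=t] c1 st(3) by simp
      have 2: "linked (ends (identify G s t)) (F - {e}) (?f (snd (ends G e))) s"
        using id_map[where G=G and F="F-{e}" and x="snd (ends G e)" and y=t and s=s and t=t] c1 by simp
      show ?thesis using 1 2 by (meson linked_sym linked_trans)
    next
      assume c1: "linked (ends G) (F-{e}) s (snd (ends G e)) \<and> linked (ends G) (F-{e}) (fst (ends G e)) t"
      have 1: "linked (ends (identify G s t)) (F - {e}) s (?f (snd (ends G e)))"
        using id_map[where G=G and F="F-{e}" and x=s and y="snd (ends G e)" and s=s and t=t] c1 st(3) by simp
      have 2: "linked (ends (identify G s t)) (F - {e}) (?f (fst (ends G e))) s"
        using id_map[where G=G and F="F-{e}" and x="fst (ends G e)" and y=t and s=s and t=t] c1 by simp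
      show ?thesis using 1 2 by (meson linked_sym linked_trans)
    qed
    with forI e show False by (simp add: forest_def identify_simps map_prod_def split_beta)
  qed
  show "good G s t F \<and> \<not> linked (ends G) F s t"
    using FE for1 near nst by (simp add: good_def)
next
  let ?f = "\<lambda>x. if x = t then s else x"
  assume B: "good G s t F \<and> \<not> linked (ends G) F s t"
  then have FE: "F \<subseteq> edges G" and for1: "forest (ends G) F"
    and near: "\<forall>x\<in>verts G. linked (ends G) F x s \<or> linked (ends G) F x t"
    and nst: "\<not> linked (ends G) F s t" by (auto simp: good_def)
  have tos: "linked (ends (identify G s t)) F x s" if "x \<in> verts G - {t}" for x
  proof -
    have "linked (ends G) F x s \<or> linked (ends G) F x t" using near that by auto
    then show ?thesis
    proof
      assume "linked (ends G) F x s"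
      from id_map[OF this, where s=s and t=t] that st(3) show ?thesis by simp
    next
      assume "linked (ends G) F x t"
      from id_map[OF this, where s=s and t=t] that show ?thesis by simp
    qed
  qed
  have conn: "\<forall>u\<in>verts G - {t}. \<forall>v\<in>verts G - {t}. linked (ends (identify G s t)) F u v"
    using tos by (meson linked_sym linked_trans)
  have forI: "forest (ends (identify G s t)) F"
    unfolding forest_def
  proof
    fix e assume e: "e \<in> F"
    define a where "a = fst (ends G e)"
    define b where "b = snd (ends G e)"
    have ab: "ends G e = (a,b)" by (simp add: a_def b_def)
    have nab: "\<not> linked (ends G) (F-{e}) a b" using for1 e by (simp add: forest_def a_def b_def)
    have eab: "linked (ends G) F a b" using e ab linked_edge2 by metis
    show "\<not> linked (ends (identify G s t)) (F - {e}) (fst (ends (identify G s t) e)) (snd (ends (identify G s t) e))"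
    proof
      assume "linked (ends (identify G s t)) (F - {e}) (fst (ends (identify G s t) e)) (snd (ends (identify G s t) e))"
      then have "linked (ends (identify G s t)) (F - {e}) (?f a) (?f b)"
        by (simp add: identify_simps ab)
      from id_rev[OF this] nab have
        "(linked (ends G) (F-{e}) a s \<or> linked (ends G) (F-{e}) a t) \<and>
           (linked (ends G) (F-{e}) b s \<or> linked (ends G) (F-{e}) b t)" by blast
      moreover have "\<And>x y. linked (ends G) (F-{e}) x y \<Longrightarrow> linked (ends G) F x y"
        by (meson Diff_subset linked_mono)
      ultimately show False using nab nst eab
        by (meson linked_sym linked_trans)
    qed
  qed
  show "is_spanning_tree (identify G s t) F"
    using FE conn forI by (simp add: st_iff_forest identify_simps)
qed

lemma exists_st_aux:
  assumes "finite F" "F \<subseteq> edges G" "\<forall>u\<in>verts G. \<forall>v\<in>verts G. linked (ends G) F u v"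
  shows "\<exists>T\<subseteq>F. is_spanning_tree G T"
  using assms
proof (induction "card F" arbitrary: F rule: less_induct)
  case less
  show ?case
  proof (cases "forest (ends G) F")
    case True
    then show ?thesis using less.prems by (auto simp: st_iff_forest)
  next
    case False
    then obtain e where e: "e \<in> F" "linked (ends G) (F-{e}) (fst (ends G e)) (snd (ends G e))"
      by (auto simp: forest_def)
    have c: "card (F-{e}) < card F" using e less.prems(1) by (meson card_Diff1_less)
    have "\<forall>u\<in>verts G. \<forall>v\<in>verts G. linked (ends G) (F-{e}) u v"
    proof (intro ballI)
      fix u v assume "u \<in> verts G" "v \<in> verts G"
      then have "linked (ends G) F u v" using less.prems by auto
      from linked_del[OF this, of e] e(2) show "linked (ends G) (F-{e}) u v"
        by (meson linked_sym linked_trans)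
    qed
    from less.hyps[OF c _ _ this] less.prems show ?thesis by (meson Diff_subset finite_Diff order_trans)
  qed
qed

lemma num_st_pos:
  assumes "wf_graph G" "connected_graph G"
  shows "num_spanning_trees G > 0"
proof -
  have "finite {T. is_spanning_tree G T}"
    by (rule finite_subset[of _ "Pow (edges G)"]) (auto simp: is_spanning_tree_def finite_edges[OF assms(1)])
  moreover have "{T. is_spanning_tree G T} \<noteq> {}"
    using exists_st_aux[of "edges G" G] assms by (auto simp: finite_edges connected_graph_def)
  ultimately show ?thesis by (simp add: num_spanning_trees_def card_gt_0_iff)
qed

definition part :: "(nat \<times> 'e) set \<Rightarrow> nat \<Rightarrow> 'e set" where
  "part T i = {e. (i,e) \<in> T}"

lemma part_diff_same: "part (T - {(i,e)}) i = part T i - {e}" by (auto simp: part_def)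
lemma part_diff_other: "j \<noteq> i \<Longrightarrow> part (T - {(i,e)}) j = part T j" by (auto simp: part_def)

lemma Suc_mod_if: "k < n \<Longrightarrow> Suc k mod n = (if Suc k = n then 0 else Suc k)"
  by (simp add: mod_Suc)

lemma pos_eq: "i < n \<Longrightarrow> p < n \<Longrightarrow> (p + n - Suc i) mod n = (if i < p then p - Suc i else p + n - Suc i)"
proof (cases "i < p")
  case True
  assume "i < n" "p < n"
  then have "p + n - Suc i = (p - Suc i) + n" using True by simp
  then have "(p + n - Suc i) mod n = (p - Suc i) mod n" by simp
  then show ?thesis using True \<open>p < n\<close> by simp
next
  case False
  assume "i < n" "p < n"
  then show ?thesis using False by simp
qed

locale cg =
  fixes n :: nat and G :: "nat \<Rightarrow> ('v,'e) mgraph" and s t :: "nat \<Rightarrow> 'v"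
  assumes n2: "n \<ge> 2"
    and gi: "\<forall>i<n. wf_graph (G i) \<and> s i \<in> verts (G i) \<and> t i \<in> verts (G i) \<and> s i \<noteq> t i"
begin

abbreviation "H \<equiv> cycle_glue n G s t"
abbreviation "\<phi> \<equiv> glue_vert n s t"

lemma ends_H: "ends H (i,e) = map_prod (\<phi> i) (\<phi> i) (ends (G i) e)"
  by (simp add: cycle_glue_def ends_def)

lemma edges_H: "edges H = {(i,e). i<n \<and> e \<in> edges (G i)}"
  by (auto simp: cycle_glue_def edges_def)

lemma verts_H: "verts H = {Inl i | i. i<n} \<union> {Inr (i, v) | i v. i < n \<and> v \<in> verts (G i) - {s i, t i}}"
  by (simp add: cycle_glue_def verts_def)

lemma phi_s: "\<phi> i (s i) = Inl i" by (simp add: glue_vert_def)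
lemma phi_t: "i<n \<Longrightarrow> \<phi> i (t i) = Inl (Suc i mod n)" using gi by (auto simp: glue_vert_def)

lemma Suc_mod_neq: "i<n \<Longrightarrow> Suc i mod n \<noteq> i"
  using n2 by (simp add: Suc_mod_if)

lemma phi_inj: "i<n \<Longrightarrow> \<phi> i u = \<phi> i v \<Longrightarrow> u = v"
  using Suc_mod_neq[of i] Suc_mod_neq[of i] by (auto simp: glue_vert_def split: if_splits)

lemma phi_Inl: "\<phi> i v = Inl p \<Longrightarrow> v = s i \<or> v = t i"
  by (auto simp: glue_vert_def split: if_splits)

lemma phi_Inr: "\<phi> i v = Inr (j,w) \<Longrightarrow> j = i \<and> w = v \<and> v \<noteq> s i \<and> v \<noteq> t i"
  by (auto simp: glue_vert_def split: if_splits)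

lemma phi_verts: "i<n \<Longrightarrow> v \<in> verts (G i) \<Longrightarrow> \<phi> i v \<in> verts H"
  unfolding verts_H by (auto simp: glue_vert_def)

lemma verts_H_cases: "x \<in> verts H \<Longrightarrow> \<exists>i<n. \<exists>v\<in>verts (G i). x = \<phi> i v"
  unfolding verts_H using gi by (auto simp: glue_vert_def)

lemma map_part: "linked (ends (G i)) (part T i) u v \<Longrightarrow> linked (ends H) T (\<phi> i u) (\<phi> i v)"
  by (rule linked_map[where g="\<lambda>e. (i,e)"]) (auto simp: part_def ends_H)

lemma label:
  assumes TE: "T \<subseteq> edges H"
    and L: "\<forall>k<n. L k (s k) = l k \<and> L k (t k) = l (Suc k mod n) \<and>
      (\<forall>e\<in>part T k. L k (fst (ends (G k) e)) = L k (snd (ends (G k) e)))"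
    and lk: "linked (ends H) T x y"
  shows "case_sum l (\<lambda>(k,v). L k v) x = case_sum l (\<lambda>(k,v). L k v) y"
proof -
  let ?Lab = "case_sum l (\<lambda>(k,v). L k v)"
  have lab: "?Lab (\<phi> k v) = L k v" if "k<n" for k v
    using L that by (auto simp: glue_vert_def)
  show ?thesis
  proof (rule linked_label[OF _ lk], rule ballI)
    fix d assume d: "d \<in> T"
    then obtain k e where ke: "d = (k,e)" "k<n" "e \<in> part T k" using TE edges_H
      by (auto simp: part_def)
    show "?Lab (fst (ends H d)) = ?Lab (snd (ends H d))"
      using ke L lab by (simp add: ends_H map_prod_def split_beta)
  qed
qed

lemma cut:
  assumes TE: "T \<subseteq> edges H" and ij: "i<n" "j<n" "i\<noteq>j"
    and bi: "\<not> linked (ends (G i)) (part T i) (s i) (t i)"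
    and bj: "\<not> linked (ends (G j)) (part T j) (s j) (t j)"
  shows "\<not> linked (ends H) T (Inl i) (Inl (Suc i mod n))"
proof
  assume lk: "linked (ends H) T (Inl i) (Inl (Suc i mod n))"
  define l where "l p = ((p + n - Suc i) mod n \<le> (j + n - Suc i) mod n)" for p
  define L where "L k v = (if k = i then linked (ends (G i)) (part T i) v (t i)
     else if k = j then linked (ends (G j)) (part T j) v (s j) else l k)" for k v
  have li: "\<not> l i" using ij by (auto simp: l_def pos_eq)
  have li1: "l (Suc i mod n)" using ij by (auto simp: l_def pos_eq Suc_mod_if)
  have lj: "l j" by (simp add: l_def)
  have lj1: "\<not> l (Suc j mod n)" using ij by (auto simp: l_def pos_eq Suc_mod_if)
  have lk1: "l k = l (Suc k mod n)" if "k<n" "k\<noteq>i" "k\<noteq>j" for k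
    using ij that by (auto simp: l_def pos_eq Suc_mod_if)
  have edge: "linked en F (fst (en e)) x = linked en F (snd (en e)) x" if "e \<in> F" for en F e x
    using that by (meson linked_edge linked_sym linked_trans)
  have C: "\<forall>k<n. L k (s k) = l k \<and> L k (t k) = l (Suc k mod n) \<and>
      (\<forall>e\<in>part T k. L k (fst (ends (G k) e)) = L k (snd (ends (G k) e)))"
  proof (intro allI impI conjI ballI)
    fix k assume k: "k<n"
    show "L k (s k) = l k" using li lj bi ij by (auto simp: L_def)
    show "L k (t k) = l (Suc k mod n)" using li1 lj1 bj ij lk1 k by (auto simp: L_def dest: linked_sym)
    fix e assume "e \<in> part T k"
    then show "L k (fst (ends (G k) e)) = L k (snd (ends (G k) e))"
      using edge[of e "part T k" "ends (G k)"] by (cases "k = i"; cases "k = j") (simp_all add: L_def)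
  qed
  from label[OF TE C lk] li li1 show False by simp
qed

lemma iso:
  assumes TE: "T \<subseteq> edges H" and i: "i<n"
    and nv: "\<not> linked (ends (G i)) (part T i) v (s i)" "\<not> linked (ends (G i)) (part T i) v (t i)"
    and lk: "linked (ends H) T (\<phi> i v) y"
  shows "\<exists>w. y = Inr (i,w) \<and> linked (ends (G i)) (part T i) v w"
proof -
  define L where "L k w = (k = i \<and> linked (ends (G i)) (part T i) v w)" for k w
  have edge: "linked en F x (fst (en e)) = linked en F x (snd (en e))" if "e \<in> F" for en F e x
    using that by (meson linked_edge linked_sym linked_trans)
  have C: "\<forall>k<n. L k (s k) = (\<lambda>_. False) k \<and> L k (t k) = (\<lambda>_. False) (Suc k mod n) \<and>
      (\<forall>e\<in>part T k. L k (fst (ends (G k) e)) = L k (snd (ends (G k) e)))"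
  proof (intro allI impI conjI ballI)
    fix k assume k: "k<n"
    show "L k (s k) = (\<lambda>_. False) k" using nv by (auto simp: L_def)
    show "L k (t k) = (\<lambda>_. False) (Suc k mod n)" using nv by (auto simp: L_def)
    fix e assume "e \<in> part T k"
    then show "L k (fst (ends (G k) e)) = L k (snd (ends (G k) e))"
      using edge[of e "part T k" "ends (G k)"] by (cases "k = i") (simp_all add: L_def)
  qed
  have v: "v \<noteq> s i" "v \<noteq> t i" using nv by auto
  from label[OF TE C lk] v have "case_sum (\<lambda>_. False) (\<lambda>(k,w). L k w) y"
    by (simp add: glue_vert_def L_def)
  then show ?thesis by (cases y) (auto simp: L_def)
qed

lemma around:
  assumes k: "k<n" and A: "\<forall>c<n. c \<noteq> k \<longrightarrow> linked (ends H) T (Inl c) (Inl (Suc c mod n))"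
    and p: "p<n"
  shows "linked (ends H) T (Inl (Suc k mod n)) (Inl p)"
proof -
  have M: "m < n \<Longrightarrow> linked (ends H) T (Inl (Suc k mod n)) (Inl ((Suc k + m) mod n))" for m
  proof (induction m)
    case (Suc m)
    define c where "c = (Suc k + m) mod n"
    have cn: "c < n" using k by (simp add: c_def)
    have ck: "c \<noteq> k"
    proof
      assume "c = k"
      have "Suc k + m < n + n" using Suc.prems k by simp
      show False
      proof (cases "Suc k + m < n")
        case True then show False using \<open>c = k\<close> by (simp add: c_def)
      next
        case False
        then have "(Suc k + m) mod n = Suc k + m - n"
          using \<open>Suc k + m < n + n\<close> by (simp add: le_mod_geq)
        then show False using \<open>c = k\<close> Suc.prems by (simp add: c_def)
      qed
    qed
    have "Suc c mod n = (Suc k + Suc m) mod n" by (simp add: c_def mod_Suc_eq)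
    with A cn ck Suc show ?case by (metis Suc_lessD c_def linked_trans)
  qed simp
  define m where "m = (if k < p then p - Suc k else p + n - Suc k)"
  have "m < n"
  proof (cases "k < p")
    case True then show ?thesis using k p by (simp add: m_def)
  next
    case False then show ?thesis using k p by (simp add: m_def)
  qed
  moreover have "(Suc k + m) mod n = p" using k p by (auto simp: m_def)
  ultimately show ?thesis using M by metis
qed

lemma Inl_verts: "p < n \<Longrightarrow> Inl p \<in> verts H" by (simp add: verts_H)

lemma st_H_iff:
  "is_spanning_tree H T \<longleftrightarrow> T \<subseteq> edges H \<and> (\<exists>k<n. good (G k) (s k) (t k) (part T k) \<and>
      \<not> linked (ends (G k)) (part T k) (s k) (t k) \<and>
      (\<forall>i<n. i \<noteq> k \<longrightarrow> good (G i) (s i) (t i) (part T i) \<and> linked (ends (G i)) (part T i) (s i) (t i)))"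
proof
  assume st: "is_spanning_tree H T"
  have TE: "T \<subseteq> edges H" and conn: "\<forall>u\<in>verts H. \<forall>v\<in>verts H. linked (ends H) T u v"
    and forH: "forest (ends H) T" using st by (auto simp: st_iff_forest)
  have partE: "part T i \<subseteq> edges (G i)" if "i<n" for i using TE that by (auto simp: edges_H part_def)
  have good: "good (G i) (s i) (t i) (part T i)" if i: "i<n" for i
  proof -
    have f: "forest (ends (G i)) (part T i)"
      unfolding forest_def
    proof
      fix e assume e: "e \<in> part T i"
      show "\<not> linked (ends (G i)) (part T i - {e}) (fst (ends (G i) e)) (snd (ends (G i) e))"
      proof
        assume "linked (ends (G i)) (part T i - {e}) (fst (ends (G i) e)) (snd (ends (G i) e))"
        then have "linked (ends (G i)) (part (T - {(i,e)}) i) (fst (ends (G i) e)) (snd (ends (G i) e))"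
          by (simp add: part_diff_same)
        from map_part[OF this] have "linked (ends H) (T - {(i,e)}) (fst (ends H (i,e))) (snd (ends H (i,e)))"
          by (simp add: ends_H map_prod_def split_beta)
        moreover have "(i,e) \<in> T" using e by (simp add: part_def)
        ultimately show False using forH unfolding forest_def by blast
      qed
    qed
    have nr: "\<forall>x\<in>verts (G i). linked (ends (G i)) (part T i) x (s i) \<or> linked (ends (G i)) (part T i) x (t i)"
    proof (rule ballI, rule ccontr)
      fix x assume x: "x \<in> verts (G i)"
        and nx: "\<not> (linked (ends (G i)) (part T i) x (s i) \<or> linked (ends (G i)) (part T i) x (t i))"
      have "linked (ends H) T (\<phi> i x) (Inl i)" using conn phi_verts[OF i x] Inl_verts[OF i] by blast
      from iso[OF TE i _ _ this] nx show False by auto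
    qed
    show ?thesis using partE[OF i] f nr by (simp add: good_def)
  qed
  have atmost: "i = j" if ij: "i<n" "j<n" "\<not> linked (ends (G i)) (part T i) (s i) (t i)"
    "\<not> linked (ends (G j)) (part T j) (s j) (t j)" for i j
  proof (rule ccontr)
    assume "i \<noteq> j"
    from cut[OF TE ij(1,2) this ij(3,4)] conn Inl_verts[OF ij(1)] Inl_verts[of "Suc i mod n"] ij(1)
    show False by (metis mod_less_divisor gr_implies_not0 neq0_conv)
  qed
  have atleast: "\<exists>k<n. \<not> linked (ends (G k)) (part T k) (s k) (t k)"
  proof (rule ccontr)
    assume "\<not> ?thesis"
    then have all: "\<forall>k<n. linked (ends (G k)) (part T k) (s k) (t k)" by auto
    have n0: "0 < n" using n2 by simp
    have fin: "finite (part T 0)" using partE[OF n0] gi n0 finite_edges by (meson finite_subset)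
    from linked_path[OF fin all[rule_format, OF n0]] gi n0 obtain e where e: "e \<in> part T 0" and
      c: "(linked (ends (G 0)) (part T 0-{e}) (s 0) (fst (ends (G 0) e)) \<and> linked (ends (G 0)) (part T 0-{e}) (snd (ends (G 0) e)) (t 0))
     \<or> (linked (ends (G 0)) (part T 0-{e}) (s 0) (snd (ends (G 0) e)) \<and> linked (ends (G 0)) (part T 0-{e}) (fst (ends (G 0) e)) (t 0))"
      by blast
    define T' where "T' = T - {(0,e)}"
    have ports: "\<forall>c<n. c \<noteq> 0 \<longrightarrow> linked (ends H) T' (Inl c) (Inl (Suc c mod n))"
    proof (intro allI impI)
      fix c assume c: "c < n" "c \<noteq> 0"
      have "linked (ends (G c)) (part T' c) (s c) (t c)" using all c by (simp add: T'_def part_diff_other)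
      from map_part[OF this] show "linked (ends H) T' (Inl c) (Inl (Suc c mod n))" using c by (simp add: phi_s phi_t)
    qed
    have backw0: "linked (ends H) T' (Inl (Suc 0 mod n)) (Inl 0)" using around[OF n0 ports n0] .
    have backw: "linked (ends H) T' (\<phi> 0 (t 0)) (\<phi> 0 (s 0))"
      using backw0 by (simp only: phi_s phi_t[OF n0])
    have p0: "part T' 0 = part T 0 - {e}" by (simp add: T'_def part_diff_same)
    have m: "linked (ends (G 0)) (part T 0 - {e}) u v \<Longrightarrow> linked (ends H) T' (\<phi> 0 u) (\<phi> 0 v)" for u v
      using map_part[of 0 T' u v] p0 by simp
    have "linked (ends H) T' (\<phi> 0 (fst (ends (G 0) e))) (\<phi> 0 (snd (ends (G 0) e)))"
      using c m backw by (meson linked_sym linked_trans)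
    then have "linked (ends H) (T - {(0,e)}) (fst (ends H (0,e))) (snd (ends H (0,e)))"
      by (simp add: T'_def ends_H map_prod_def split_beta)
    moreover have "(0,e) \<in> T" using e by (simp add: part_def)
    ultimately show False using forH unfolding forest_def by blast
  qed
  then obtain k where k: "k<n" "\<not> linked (ends (G k)) (part T k) (s k) (t k)" by blast
  show "T \<subseteq> edges H \<and> (\<exists>k<n. good (G k) (s k) (t k) (part T k) \<and>
      \<not> linked (ends (G k)) (part T k) (s k) (t k) \<and>
      (\<forall>i<n. i \<noteq> k \<longrightarrow> good (G i) (s i) (t i) (part T i) \<and> linked (ends (G i)) (part T i) (s i) (t i)))"
    using TE k good atmost by blast
next
  assume R: "T \<subseteq> edges H \<and> (\<exists>k<n. good (G k) (s k) (t k) (part T k) \<and>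
      \<not> linked (ends (G k)) (part T k) (s k) (t k) \<and>
      (\<forall>i<n. i \<noteq> k \<longrightarrow> good (G i) (s i) (t i) (part T i) \<and> linked (ends (G i)) (part T i) (s i) (t i)))"
  then obtain k where TE: "T \<subseteq> edges H" and k: "k<n" and bk: "\<not> linked (ends (G k)) (part T k) (s k) (t k)"
    and goodall: "\<forall>i<n. good (G i) (s i) (t i) (part T i)"
    and oth: "\<forall>i<n. i \<noteq> k \<longrightarrow> linked (ends (G i)) (part T i) (s i) (t i)" by blast
  have ports: "\<forall>c<n. c \<noteq> k \<longrightarrow> linked (ends H) T (Inl c) (Inl (Suc c mod n))"
  proof (intro allI impI)
    fix c assume c: "c < n" "c \<noteq> k"
    from map_part[OF oth[rule_format, OF c]] show "linked (ends H) T (Inl c) (Inl (Suc c mod n))"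
      using c by (simp add: phi_s phi_t)
  qed
  have base: "linked (ends H) T (Inl p) (Inl (Suc k mod n))" if "p<n" for p
    using around[OF k ports that] linked_sym by metis
  have tobase: "linked (ends H) T x (Inl (Suc k mod n))" if xH: "x \<in> verts H" for x
  proof -
    obtain i v where iv: "i<n" "v \<in> verts (G i)" "x = \<phi> i v" using verts_H_cases[OF xH] by blast
    then have "linked (ends (G i)) (part T i) v (s i) \<or> linked (ends (G i)) (part T i) v (t i)"
      using goodall by (auto simp: good_def)
    then show ?thesis
    proof
      assume "linked (ends (G i)) (part T i) v (s i)"
      from map_part[OF this] have "linked (ends H) T x (Inl i)" using iv by (simp add: phi_s)
      then show ?thesis using base[OF iv(1)] by (rule linked_trans)
    next
      assume "linked (ends (G i)) (part T i) v (t i)"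
      from map_part[OF this] have "linked (ends H) T x (Inl (Suc i mod n))" using iv by (simp add: phi_t)
      then show ?thesis using base[of "Suc i mod n"] iv(1) by (meson linked_trans mod_less_divisor le_less_trans zero_le)
    qed
  qed
  have conn: "\<forall>u\<in>verts H. \<forall>v\<in>verts H. linked (ends H) T u v"
    using tobase by (meson linked_sym linked_trans)
  have forH: "forest (ends H) T"
    unfolding forest_def
  proof
    fix d assume d: "d \<in> T"
    then obtain i e where ie: "d = (i,e)" "i<n" "e \<in> part T i" using TE by (auto simp: edges_H part_def)
    define T' where "T' = T - {(i,e)}"
    define a where "a = fst (ends (G i) e)"
    define b where "b = snd (ends (G i) e)"
    define P' where "P' = part T i - {e}"
    have pT': "part T' i = P'" by (simp add: T'_def P'_def part_diff_same)
    have T'E: "T' \<subseteq> edges H" using TE by (auto simp: T'_def)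
    have nab: "\<not> linked (ends (G i)) P' a b"
      using goodall ie by (simp add: good_def forest_def P'_def a_def b_def)
    have ab: "linked (ends (G i)) (part T i) a b" using ie(3) linked_edge by (simp add: a_def b_def linked_edge)
    have mono: "linked (ends (G i)) P' x y \<Longrightarrow> linked (ends (G i)) (part T i) x y" for x y
      by (rule linked_mono[of P']) (auto simp: P'_def)
    show "\<not> linked (ends H) (T - {d}) (fst (ends H d)) (snd (ends H d))"
    proof
      assume "linked (ends H) (T - {d}) (fst (ends H d)) (snd (ends H d))"
      then have L: "linked (ends H) T' (\<phi> i a) (\<phi> i b)"
        by (simp add: ie T'_def ends_H map_prod_def split_beta a_def b_def)
      show False
      proof (cases "linked (ends (G i)) P' a (s i) \<or> linked (ends (G i)) P' a (t i)")
        case False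
        from iso[OF T'E ie(2), of a "\<phi> i b"] False L pT' obtain w where
          "\<phi> i b = Inr (i,w)" "linked (ends (G i)) P' a w" by auto
        with phi_Inr nab show False by metis
      next
        case Ta: True
        show False
        proof (cases "linked (ends (G i)) P' b (s i) \<or> linked (ends (G i)) P' b (t i)")
          case False
          from iso[OF T'E ie(2), of b "\<phi> i a"] False L pT' linked_sym obtain w where
            "\<phi> i a = Inr (i,w)" "linked (ends (G i)) P' b w" by metis
          with phi_Inr nab linked_sym show False by metis
        next
          case Tb: True
          have combo: "(linked (ends (G i)) P' a (s i) \<and> linked (ends (G i)) P' b (t i)) \<or>
             (linked (ends (G i)) P' a (t i) \<and> linked (ends (G i)) P' b (s i))"
            using Ta Tb nab by (meson linked_sym linked_trans)
          have nst: "\<not> linked (ends (G i)) P' (s i) (t i)"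
            using combo nab by (meson linked_sym linked_trans)
          have "linked (ends (G i)) (part T i) (s i) (t i)"
            using combo mono ab by (meson linked_sym linked_trans)
          then have ik: "i \<noteq> k" using bk by blast
          have bk': "\<not> linked (ends (G k)) (part T' k) (s k) (t k)"
            using bk ik by (simp add: T'_def part_diff_other)
          have cutc: "\<not> linked (ends H) T' (Inl i) (Inl (Suc i mod n))"
            using cut[OF T'E ie(2) k ik _ bk'] nst pT' by simp
          have m: "linked (ends (G i)) P' x y \<Longrightarrow> linked (ends H) T' (\<phi> i x) (\<phi> i y)" for x y
            using map_part[of i T' x y] pT' by simp
          have "linked (ends H) T' (\<phi> i (s i)) (\<phi> i (t i))"
            using combo m L by (meson linked_sym linked_trans)
          then show False using cutc phi_s phi_t ie(2) by simp
        qed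
      qed
    qed
  qed
  show "is_spanning_tree H T" using TE conn forH by (simp add: st_iff_forest)
qed

lemma finite_edges_H: "finite (edges H)"
proof -
  have "edges H \<subseteq> {..<n} \<times> (\<Union>i<n. edges (G i))" by (auto simp: edges_H)
  moreover have "finite (\<Union>i<n. edges (G i))"
    by (intro finite_UN_I finite_lessThan) (use gi finite_edges in blast)
  ultimately show ?thesis by (meson finite_SigmaI finite_lessThan finite_subset)
qed

lemma card_H: "num_spanning_trees H = (\<Sum>k<n. num_spanning_trees (identify (G k) (s k) (t k)) *
    (\<Prod>i\<in>{..<n}-{k}. num_spanning_trees (G i)))"
proof -
  define ST where "ST i = {F. is_spanning_tree (G i) F}" for i
  define TF where "TF i = {F. is_spanning_tree (identify (G i) (s i) (t i)) F}" for i
  define S where "S k = {T. T \<subseteq> edges H \<and> part T k \<in> TF k \<and> (\<forall>i<n. i \<noteq> k \<longrightarrow> part T i \<in> ST i)}" for k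
  have C1': "F \<in> ST i \<longleftrightarrow> good (G i) (s i) (t i) F \<and> linked (ends (G i)) F (s i) (t i)" if "i<n" for i F
    using C1[of "s i" "G i" "t i" F] gi that by (simp add: ST_def)
  have C2': "F \<in> TF i \<longleftrightarrow> good (G i) (s i) (t i) F \<and> \<not> linked (ends (G i)) F (s i) (t i)" if "i<n" for i F
    using C2[of "G i" "s i" "t i" F] gi that by (simp add: TF_def)
  have U: "{T. is_spanning_tree H T} = (\<Union>k\<in>{..<n}. S k)"
    unfolding st_H_iff S_def using C1' C2' by auto
  have disj: "S k \<inter> S k' = {}" if "k<n" "k'<n" "k \<noteq> k'" for k k'
    using that C1' C2' unfolding S_def by auto
  have finS: "finite (S k)" for k
    by (rule finite_subset[of _ "Pow (edges H)"]) (auto simp: S_def finite_edges_H)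
  have sub: "F \<subseteq> edges (G i)" if "F \<in> ST i \<or> F \<in> TF i" for F i
    using that by (auto simp: ST_def TF_def is_spanning_tree_def identify_simps)
  have cardS: "card (S k) = card (TF k) * (\<Prod>i\<in>{..<n}-{k}. card (ST i))" if k: "k<n" for k
  proof -
    define A where "A i = (if i = k then TF i else ST i)" for i
    define h :: "(nat \<times> 'e) set \<Rightarrow> nat \<Rightarrow> 'e set" where "h T = (\<lambda>i\<in>{..<n}. part T i)" for T
    define g :: "(nat \<Rightarrow> 'e set) \<Rightarrow> (nat \<times> 'e) set" where "g f = {(i,e). i<n \<and> e \<in> f i}" for f
    have "bij_betw h (S k) (PiE {..<n} A)"
    proof -
      have l: "\<forall>a\<in>S k. g (h a) = a"
        by (auto simp: S_def g_def h_def part_def edges_H)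
      have r: "\<forall>a'\<in>PiE {..<n} A. h (g a') = a'"
      proof
        fix f assume f: "f \<in> PiE {..<n} A"
        show "h (g f) = f"
        proof
          fix i show "h (g f) i = f i"
            using f by (cases "i < n") (auto simp: h_def g_def part_def PiE_def extensional_def)
        qed
      qed
      have i1: "h ` S k \<subseteq> PiE {..<n} A"
        by (auto simp: S_def h_def A_def)
      have i2: "g ` PiE {..<n} A \<subseteq> S k"
      proof
        fix T assume "T \<in> g ` PiE {..<n} A"
        then obtain f where f: "f \<in> PiE {..<n} A" "T = g f" by blast
        have pf: "part T i = f i" if "i<n" for i using f that by (auto simp: g_def part_def)
        have "T \<subseteq> edges H"
        proof
          fix d assume "d \<in> T"
          then obtain i e where "d = (i,e)" "i<n" "e \<in> f i" using f by (auto simp: g_def)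
          moreover have "f i \<in> A i" using f \<open>i<n\<close> by auto
          ultimately show "d \<in> edges H" using sub[of "f i" i] by (auto simp: edges_H A_def split: if_splits)
        qed
        moreover have "part T k \<in> TF k"
        proof -
          have "f k \<in> A k" using f(1) k by blast
          then show ?thesis using pf[OF k] by (simp add: A_def)
        qed
        moreover have "\<forall>i<n. i \<noteq> k \<longrightarrow> part T i \<in> ST i"
        proof (intro allI impI)
          fix i assume i: "i<n" "i \<noteq> k"
          have "f i \<in> A i" using f(1) i by blast
          then show "part T i \<in> ST i" using pf[OF i(1)] i by (simp add: A_def)
        qed
        ultimately show "T \<in> S k" by (simp add: S_def)
      qed
      show ?thesis by (rule bij_betw_byWitness[OF l r i1 i2])
    qed
    then have "card (S k) = card (PiE {..<n} A)" by (rule bij_betw_same_card)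
    also have "\<dots> = (\<Prod>i<n. card (A i))" by (simp add: card_PiE)
    also have "\<dots> = card (A k) * (\<Prod>i\<in>{..<n}-{k}. card (A i))"
      using k by (simp add: prod.remove)
    also have "\<dots> = card (TF k) * (\<Prod>i\<in>{..<n}-{k}. card (ST i))"
      by (simp add: A_def)
    finally show ?thesis .
  qed
  have "num_spanning_trees H = card (\<Union>k\<in>{..<n}. S k)"
    by (simp add: num_spanning_trees_def U)
  also have "\<dots> = (\<Sum>k<n. card (S k))"
    by (rule card_UN_disjoint) (auto simp: finS disj)
  also have "\<dots> = (\<Sum>k<n. num_spanning_trees (identify (G k) (s k) (t k)) *
    (\<Prod>i\<in>{..<n}-{k}. num_spanning_trees (G i)))"
    by (rule sum.cong) (auto simp: cardS num_spanning_trees_def ST_def TF_def)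
  finally show ?thesis .
qed

end


theorem theorem4p12:
  fixes n :: nat
  assumes "n \<ge> 2"
  shows "(\<forall>(G :: nat \<Rightarrow> ('v,'e) mgraph) (s :: nat \<Rightarrow> 'v) t.
            (\<forall>i<n. wf_graph (G i) \<and> connected_graph (G i) \<and>
                   s i \<in> verts (G i) \<and> t i \<in> verts (G i) \<and> s i \<noteq> t i) \<longrightarrow>
            real (num_spanning_trees (cycle_glue n G s t)) =
              (\<Prod>i<n. real (num_spanning_trees (G i))) *
              (\<Sum>i<n. real (num_spanning_trees (identify (G i) (s i) (t i)))
                        / real (num_spanning_trees (G i))))
       \<and> (\<forall>(G :: ('v,'e) mgraph) (s :: 'v) t.
            wf_graph G \<and> connected_graph G \<and> s \<in> verts G \<and> t \<in> verts G \<and> s \<noteq> t \<longrightarrow>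
            num_spanning_trees (cycle_glue n (\<lambda>_. G) (\<lambda>_. s) (\<lambda>_. t)) =
              n * num_spanning_trees G ^ (n - 1) * num_spanning_trees (identify G s t))"
proof -
  have P1: "\<forall>(G :: nat \<Rightarrow> ('v,'e) mgraph) (s :: nat \<Rightarrow> 'v) t.
            (\<forall>i<n. wf_graph (G i) \<and> connected_graph (G i) \<and>
                   s i \<in> verts (G i) \<and> t i \<in> verts (G i) \<and> s i \<noteq> t i) \<longrightarrow>
            real (num_spanning_trees (cycle_glue n G s t)) =
              (\<Prod>i<n. real (num_spanning_trees (G i))) *
              (\<Sum>i<n. real (num_spanning_trees (identify (G i) (s i) (t i)))
                        / real (num_spanning_trees (G i)))"
  proof (intro allI impI)
    fix G :: "nat \<Rightarrow> ('v,'e) mgraph" and s t :: "nat \<Rightarrow> 'v"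
    assume h: "\<forall>i<n. wf_graph (G i) \<and> connected_graph (G i) \<and>
                   s i \<in> verts (G i) \<and> t i \<in> verts (G i) \<and> s i \<noteq> t i"
    interpret cg n G s t using assms h by unfold_locales auto
    have pos: "real (num_spanning_trees (G i)) > 0" if "i<n" for i
      using h num_st_pos[of "G i"] that by auto
    have "real (num_spanning_trees (cycle_glue n G s t)) =
      (\<Sum>k<n. real (num_spanning_trees (identify (G k) (s k) (t k))) *
        (\<Prod>i\<in>{..<n}-{k}. real (num_spanning_trees (G i))))"
      by (simp add: card_H)
    also have "\<dots> = (\<Sum>k<n. (\<Prod>i<n. real (num_spanning_trees (G i))) *
        (real (num_spanning_trees (identify (G k) (s k) (t k))) / real (num_spanning_trees (G k))))"
    proof (rule sum.cong)
      fix k assume "k \<in> {..<n}"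
      then have k: "k<n" by simp
      have "(\<Prod>i<n. real (num_spanning_trees (G i))) =
        real (num_spanning_trees (G k)) * (\<Prod>i\<in>{..<n}-{k}. real (num_spanning_trees (G i)))"
        using k by (simp add: prod.remove)
      then show "real (num_spanning_trees (identify (G k) (s k) (t k))) *
        (\<Prod>i\<in>{..<n}-{k}. real (num_spanning_trees (G i))) =
        (\<Prod>i<n. real (num_spanning_trees (G i))) *
        (real (num_spanning_trees (identify (G k) (s k) (t k))) / real (num_spanning_trees (G k)))"
        using pos[OF k] by (simp add: field_simps)
    qed simp
    also have "\<dots> = (\<Prod>i<n. real (num_spanning_trees (G i))) *
              (\<Sum>i<n. real (num_spanning_trees (identify (G i) (s i) (t i)))
                        / real (num_spanning_trees (G i)))"
      by (simp add: sum_distrib_left)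
    finally show "real (num_spanning_trees (cycle_glue n G s t)) =
              (\<Prod>i<n. real (num_spanning_trees (G i))) *
              (\<Sum>i<n. real (num_spanning_trees (identify (G i) (s i) (t i)))
                        / real (num_spanning_trees (G i)))" .
  qed
  have P2: "\<forall>(G :: ('v,'e) mgraph) (s :: 'v) t.
            wf_graph G \<and> connected_graph G \<and> s \<in> verts G \<and> t \<in> verts G \<and> s \<noteq> t \<longrightarrow>
            num_spanning_trees (cycle_glue n (\<lambda>_. G) (\<lambda>_. s) (\<lambda>_. t)) =
              n * num_spanning_trees G ^ (n - 1) * num_spanning_trees (identify G s t)"
  proof (intro allI impI)
    fix G :: "('v,'e) mgraph" and s t :: 'v
    assume h: "wf_graph G \<and> connected_graph G \<and> s \<in> verts G \<and> t \<in> verts G \<and> s \<noteq> t"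
    have pos: "real (num_spanning_trees G) > 0" using h num_st_pos[of G] by auto
    have "real (num_spanning_trees (cycle_glue n (\<lambda>_. G) (\<lambda>_. s) (\<lambda>_. t))) =
      real (num_spanning_trees G) ^ n * (real n * (real (num_spanning_trees (identify G s t)) / real (num_spanning_trees G)))"
      using P1[rule_format, of "\<lambda>_. G" "\<lambda>_. s" "\<lambda>_. t"] h by simp
    also have "\<dots> = real (n * num_spanning_trees G ^ (n - 1) * num_spanning_trees (identify G s t))"
    proof -
      have "real (num_spanning_trees G) ^ n = real (num_spanning_trees G) * real (num_spanning_trees G) ^ (n - 1)"
        using assms by (metis Suc_diff_1 le_trans one_le_numeral not_one_le_zero power_Suc neq0_conv le_0_eq)
      then show ?thesis using pos by (simp add: field_simps)
    qed
    finally show "num_spanning_trees (cycle_glue n (\<lambda>_. G) (\<lambda>_. s) (\<lambda>_. t)) =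
              n * num_spanning_trees G ^ (n - 1) * num_spanning_trees (identify G s t)"
      by (simp only: of_nat_eq_iff)
  qed
  show ?thesis using P1 P2 by blast
qed

end
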